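(* Let $\mathcal{R}$ be a commutative ring with unity, $P$ a locally finite poset and $b$ an additive biderivation of $I(P,\mathcal{R})$. For any $x<y<z$ in $P$: (1) $b_{xy}(e_{xy},e_{xx})=b_{yz}(e_{yz},e_{yy})=b_{xz}(e_{xz},e_{xx})$; (2) $b_{xy}(e_{xx},e_{xy})=b_{yz}(e_{yy},e_{yz})=b_{xz}(e_{xx},e_{xz})$.
   Context: $I(P,\mathcal{R})$ is the incidence algebra: functions $f:P\times P\to\mathcal{R}$ with $f(x,y)=0$ unless $x\le y$, with product $(fg)(x,y)=\sum_{x\le z\le y}f(x,z)g(z,y)$; $e_{xy}$ ($x\le y$) is the function equal to $1$ at $(x,y)$ and $0$ elsewhere. An additive biderivation is a map $b$ of two arguments, additive in each, with $b(\alpha\beta,\gamma)=\alpha b(\beta,\gamma)+b(\alpha,\gamma)\beta$ and $b(\alpha,\beta\gamma)=\beta b(\alpha,\gamma)+b(\alpha,\beta)\gamma$. Write $b_{pq}(\alpha,\beta)=b(\alpha,\beta)(p,q)$. *)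

theory Defs
  imports Main
begin

text \<open>The poset P is the ordered type 'a; it is locally finite when all closed
intervals are finite.\<close>
definition locally_finite_poset :: "'a::order itself \<Rightarrow> bool" where
  "locally_finite_poset _ \<longleftrightarrow> (\<forall>x y::'a. finite {x..y})"

definition incidence :: "('a::order \<Rightarrow> 'a \<Rightarrow> 'r::comm_ring_1) set" where
  "incidence = {f. \<forall>x y. \<not> x \<le> y \<longrightarrow> f x y = 0}"

definition inc_add :: "('a::order \<Rightarrow> 'a \<Rightarrow> 'r::comm_ring_1) \<Rightarrow> ('a \<Rightarrow> 'a \<Rightarrow> 'r) \<Rightarrow> ('a \<Rightarrow> 'a \<Rightarrow> 'r)" where
  "inc_add f g = (\<lambda>x y. f x y + g x y)"

definition inc_mult :: "('a::order \<Rightarrow> 'a \<Rightarrow> 'r::comm_ring_1) \<Rightarrow> ('a \<Rightarrow> 'a \<Rightarrow> 'r) \<Rightarrow> ('a \<Rightarrow> 'a \<Rightarrow> 'r)" where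
  "inc_mult f g = (\<lambda>x y. \<Sum>z\<in>{x..y}. f x z * g z y)"

definition inc_e :: "'a::order \<Rightarrow> 'a \<Rightarrow> ('a \<Rightarrow> 'a \<Rightarrow> 'r::comm_ring_1)" where
  "inc_e x y = (\<lambda>u v. if u = x \<and> v = y then 1 else 0)"

definition additive_biderivation ::
  "(('a::order \<Rightarrow> 'a \<Rightarrow> 'r::comm_ring_1) \<Rightarrow> ('a \<Rightarrow> 'a \<Rightarrow> 'r) \<Rightarrow> ('a \<Rightarrow> 'a \<Rightarrow> 'r)) \<Rightarrow> bool" where
  "additive_biderivation b \<longleftrightarrow>
     (\<forall>\<alpha>\<in>incidence. \<forall>\<beta>\<in>incidence. b \<alpha> \<beta> \<in> incidence) \<and>
     (\<forall>\<alpha>\<in>incidence. \<forall>\<beta>\<in>incidence. \<forall>\<gamma>\<in>incidence.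
        b (inc_add \<alpha> \<beta>) \<gamma> = inc_add (b \<alpha> \<gamma>) (b \<beta> \<gamma>) \<and>
        b \<alpha> (inc_add \<beta> \<gamma>) = inc_add (b \<alpha> \<beta>) (b \<alpha> \<gamma>) \<and>
        b (inc_mult \<alpha> \<beta>) \<gamma> = inc_add (inc_mult \<alpha> (b \<beta> \<gamma>)) (inc_mult (b \<alpha> \<gamma>) \<beta>) \<and>
        b \<alpha> (inc_mult \<beta> \<gamma>) = inc_add (inc_mult \<beta> (b \<alpha> \<gamma>)) (inc_mult (b \<alpha> \<beta>) \<gamma>))"

end

theory Submission
  imports Defs
begin

lemma canc: "(a::'r::ab_group_add) + c = 0 \<Longrightarrow> b + c = 0 \<Longrightarrow> a = b"
  by (metis add_right_cancel)

lemma e_inc: "(a::'a::order) \<le> c \<Longrightarrow> (inc_e a c :: 'a \<Rightarrow> 'a \<Rightarrow> 'r::comm_ring_1) \<in> incidence"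
  unfolding incidence_def inc_e_def by auto

lemma zero_inc: "(\<lambda>_ _. 0 :: 'r::comm_ring_1) \<in> (incidence :: ('a::order \<Rightarrow> 'a \<Rightarrow> 'r) set)"
  unfolding incidence_def by auto

lemma mult_e_left:
  assumes "finite {p..q}"
  shows "inc_mult (inc_e a c) f p q = (if p = a \<and> a \<le> c \<and> c \<le> q then f c q else (0::'r::comm_ring_1))"
proof -
  have "inc_mult (inc_e a c) f p q = (\<Sum>z\<in>{p..q}. if z = c then (if p = a then f z q else 0) else 0)"
    unfolding inc_mult_def inc_e_def by (rule sum.cong) auto
  also have "\<dots> = (if c \<in> {p..q} then (if p = a then f c q else 0) else 0)"
    using assms by (simp add: sum.delta')
  finally show ?thesis by auto
qed

lemma mult_e_right:
  assumes "finite {p..q}"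
  shows "inc_mult f (inc_e a c) p q = (if q = c \<and> p \<le> a \<and> a \<le> c then f p a else (0::'r::comm_ring_1))"
proof -
  have "inc_mult f (inc_e a c) p q = (\<Sum>z\<in>{p..q}. if z = a then (if q = c then f p z else 0) else 0)"
    unfolding inc_mult_def inc_e_def by (rule sum.cong) auto
  also have "\<dots> = (if a \<in> {p..q} then (if q = c then f p a else 0) else 0)"
    using assms by (simp add: sum.delta')
  finally show ?thesis by auto
qed

lemma mult_ee:
  assumes lf: "\<forall>x y::'a::order. finite {x..y}" and "a \<le> c" "c \<le> d"
  shows "inc_mult (inc_e a c) (inc_e c d) = (inc_e a d :: 'a \<Rightarrow> 'a \<Rightarrow> 'r::comm_ring_1)"
  using assms by (auto simp: fun_eq_iff mult_e_left) (auto simp: inc_e_def)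

lemma mult_ee0:
  fixes a c c' d :: "'a::order"
  assumes lf: "\<forall>x y::'a. finite {x..y}" and "c \<noteq> c'"
  shows "inc_mult (inc_e a c) (inc_e c' d) = (\<lambda>_ _. 0 :: 'r::comm_ring_1)"
proof (intro ext)
  fix p q
  have "inc_mult (inc_e a c) (inc_e c' d) p q = (if p = a \<and> a \<le> c \<and> c \<le> q then (inc_e c' d :: 'a \<Rightarrow> 'a \<Rightarrow> 'r) c q else 0)"
    using lf mult_e_left by blast
  then show "inc_mult (inc_e a c) (inc_e c' d) p q = (0::'r)" using assms(2) by (simp add: inc_e_def)
qed

lemma mult_ee1:
  assumes lf: "\<forall>x y::'a::order. finite {x..y}"
  shows "inc_mult (inc_e a a) (inc_e a a) = (inc_e a a :: 'a \<Rightarrow> 'a \<Rightarrow> 'r::comm_ring_1)"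
  using mult_ee[OF lf] by auto

theorem mainTheorem14:
  fixes b :: "('a::order \<Rightarrow> 'a \<Rightarrow> 'r::comm_ring_1) \<Rightarrow> ('a \<Rightarrow> 'a \<Rightarrow> 'r) \<Rightarrow> ('a \<Rightarrow> 'a \<Rightarrow> 'r)"
    and x y z :: 'a
  assumes "locally_finite_poset TYPE('a)"
    and "additive_biderivation b"
    and "x < y" and "y < z"
  shows "(b (inc_e x y) (inc_e x x) x y = b (inc_e y z) (inc_e y y) y z \<and>
          b (inc_e y z) (inc_e y y) y z = b (inc_e x z) (inc_e x x) x z) \<and>
         (b (inc_e x x) (inc_e x y) x y = b (inc_e y y) (inc_e y z) y z \<and>
         b (inc_e y y) (inc_e y z) y z = b (inc_e x x) (inc_e x z) x z)"
proof -
  have lf: "\<forall>x y::'a. finite {x..y}" using assms(1) unfolding locally_finite_poset_def by auto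
  note B = assms(2)[unfolded additive_biderivation_def]
  have bin: "\<And>\<alpha> \<beta>. \<alpha> \<in> incidence \<Longrightarrow> \<beta> \<in> incidence \<Longrightarrow> b \<alpha> \<beta> \<in> incidence" using B by blast
  have D1: "\<And>\<alpha> \<beta> \<gamma>. \<alpha> \<in> incidence \<Longrightarrow> \<beta> \<in> incidence \<Longrightarrow> \<gamma> \<in> incidence \<Longrightarrow>
     b (inc_mult \<alpha> \<beta>) \<gamma> p q = inc_mult \<alpha> (b \<beta> \<gamma>) p q + inc_mult (b \<alpha> \<gamma>) \<beta> p q" for p q
    using B unfolding inc_add_def by metis
  have D2: "\<And>\<alpha> \<beta> \<gamma>. \<alpha> \<in> incidence \<Longrightarrow> \<beta> \<in> incidence \<Longrightarrow> \<gamma> \<in> incidence \<Longrightarrow>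
     b \<alpha> (inc_mult \<beta> \<gamma>) p q = inc_mult \<beta> (b \<alpha> \<gamma>) p q + inc_mult (b \<alpha> \<beta>) \<gamma> p q" for p q
    using B unfolding inc_add_def by metis
  have Z1: "b (\<lambda>_ _. 0) \<gamma> = (\<lambda>_ _. 0::'r)" if "\<gamma> \<in> incidence" for \<gamma>
  proof -
    have "b (inc_add (\<lambda>_ _. 0) (\<lambda>_ _. 0)) \<gamma> = inc_add (b (\<lambda>_ _. 0) \<gamma>) (b (\<lambda>_ _. 0) \<gamma>)"
      using B zero_inc that by blast
    moreover have "inc_add (\<lambda>_ _. 0::'r) (\<lambda>_ _. 0) = ((\<lambda>_ _. 0) :: 'a \<Rightarrow> 'a \<Rightarrow> 'r)" by (simp add: inc_add_def)
    ultimately show ?thesis by (auto simp: inc_add_def fun_eq_iff)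
  qed
  have Z2: "b \<alpha> (\<lambda>_ _. 0) = (\<lambda>_ _. 0::'r)" if "\<alpha> \<in> incidence" for \<alpha>
  proof -
    have "b \<alpha> (inc_add (\<lambda>_ _. 0) (\<lambda>_ _. 0)) = inc_add (b \<alpha> (\<lambda>_ _. 0)) (b \<alpha> (\<lambda>_ _. 0))"
      using B zero_inc that by blast
    moreover have "inc_add (\<lambda>_ _. 0::'r) (\<lambda>_ _. 0) = ((\<lambda>_ _. 0) :: 'a \<Rightarrow> 'a \<Rightarrow> 'r)" by (simp add: inc_add_def)
    ultimately show ?thesis by (auto simp: inc_add_def fun_eq_iff)
  qed
  have A2: "b \<alpha> (inc_e a a) p q = 0" if "\<alpha> \<in> incidence" "p \<noteq> a" "q \<noteq> a" for \<alpha> a p q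
    using D2[OF that(1) e_inc e_inc, of a a a a p q] that lf
    by (simp add: mult_ee1[OF lf] mult_e_left mult_e_right)
  have A1: "b (inc_e a a) \<gamma> p q = 0" if "\<gamma> \<in> incidence" "p \<noteq> a" "q \<noteq> a" for \<gamma> a p q
    using D1[OF e_inc e_inc that(1), of a a a a p q] that lf
    by (simp add: mult_ee1[OF lf] mult_e_left mult_e_right)
  have xy: "x \<le> y" "y \<le> z" "x \<le> z" "x \<noteq> y" "y \<noteq> z" "x \<noteq> z" using assms by auto
  note ins = e_inc[OF xy(1)] e_inc[OF xy(2)] e_inc[OF xy(3)] e_inc[of x x] e_inc[of y y]
  have fin: "finite {x..y}" "finite {y..z}" "finite {x..z}" "finite {x..x}" "finite {y..y}" using lf by auto
  have s1: "b (inc_e x z) (inc_e x x) x z = b (inc_e y z) (inc_e x x) y z + b (inc_e x y) (inc_e x x) x y"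
    using D1[OF ins(1) ins(2) ins(4), of x z] xy fin
    by (simp add: mult_ee[OF lf xy(1) xy(2)] mult_e_left mult_e_right)
  have s2: "b (inc_e y z) (inc_e x x) y z = 0" using A2[OF ins(2)] xy by auto
  have s3: "b (inc_e x z) (inc_e y y) x z = b (inc_e y z) (inc_e y y) y z + b (inc_e x y) (inc_e y y) x y"
    using D1[OF ins(1) ins(2) ins(5), of x z] xy fin
    by (simp add: mult_ee[OF lf xy(1) xy(2)] mult_e_left mult_e_right)
  have s4: "b (inc_e x z) (inc_e y y) x z = 0" using A2[OF ins(3)] xy by auto
  have s5: "0 = b (inc_e x y) (inc_e y y) x y + b (inc_e x y) (inc_e x x) x y"
    using D2[OF ins(1) ins(4) ins(5), of x y] xy fin Z2[OF ins(1)]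
    by (simp add: mult_ee0[OF lf xy(4)] mult_e_left mult_e_right)
  have t1: "b (inc_e x x) (inc_e x z) x z = b (inc_e x x) (inc_e y z) y z + b (inc_e x x) (inc_e x y) x y"
    using D2[OF ins(4) ins(1) ins(2), of x z] xy fin
    by (simp add: mult_ee[OF lf xy(1) xy(2)] mult_e_left mult_e_right)
  have t2: "b (inc_e x x) (inc_e y z) y z = 0" using A1[OF ins(2)] xy by auto
  have t3: "b (inc_e y y) (inc_e x z) x z = b (inc_e y y) (inc_e y z) y z + b (inc_e y y) (inc_e x y) x y"
    using D2[OF ins(5) ins(1) ins(2), of x z] xy fin
    by (simp add: mult_ee[OF lf xy(1) xy(2)] mult_e_left mult_e_right)
  have t4: "b (inc_e y y) (inc_e x z) x z = 0" using A1[OF ins(3)] xy by auto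
  have t5: "0 = b (inc_e y y) (inc_e x y) x y + b (inc_e x x) (inc_e x y) x y"
    using D1[OF ins(4) ins(5) ins(1), of x y] xy fin Z1[OF ins(1)]
    by (simp add: mult_ee0[OF lf xy(4)] mult_e_left mult_e_right)
  have p1: "b (inc_e y z) (inc_e y y) y z = b (inc_e x y) (inc_e x x) x y"
  proof (rule canc)
    show "b (inc_e y z) (inc_e y y) y z + b (inc_e x y) (inc_e y y) x y = 0" using s3 s4 by simp
    show "b (inc_e x y) (inc_e x x) x y + b (inc_e x y) (inc_e y y) x y = 0" using s5 by (simp add: add.commute)
  qed
  have p2: "b (inc_e y y) (inc_e y z) y z = b (inc_e x x) (inc_e x y) x y"
  proof (rule canc)
    show "b (inc_e y y) (inc_e y z) y z + b (inc_e y y) (inc_e x y) x y = 0" using t3 t4 by simp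
    show "b (inc_e x x) (inc_e x y) x y + b (inc_e y y) (inc_e x y) x y = 0" using t5 by (simp add: add.commute)
  qed
  show ?thesis using p1 p2 s1 s2 t1 t2 by simp
qed

end
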